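(* Let $(V,\omega,H)$ be a linear Hamiltonian system (a finite-dimensional real symplectic vector space $(V,\omega)$ with a quadratic form $H$) which decomposes as a direct sum $(V_1,\omega_1,H_1)\oplus(V_2,\omega_2,H_2)$, i.e. $V=V_1\oplus V_2$ with $\omega=\omega_1\oplus\omega_2$ and $H(v_1+v_2)=H_1(v_1)+H_2(v_2)$. Let $\mathcal{N}=H^{-1}(0)$ and $\mathcal{N}_j=H_j^{-1}(0)\subset V_j$. Suppose the linear Hamiltonian vector fields associated with $H_1$ and $H_2$ have no eigenvalues in common. Then every Lagrangian subspace $L\subset V$ with $L\subset\mathcal{N}$ can be written as a direct sum $L=L_1\oplus L_2$, where each $L_j$ is a Lagrangian subspace of $(V_j,\omega_j)$ contained in $\mathcal{N}_j$.
   Context: For a linear Hamiltonian system $(V,\omega,H)$, the associated linear vector field is $X_H$ defined by $\omega(X_H(v),\cdot)=\mathrm{d}H(v)$; its eigenvalues are the eigenvalues of the system. A Lagrangian subspace of a symplectic vector space is a subspace of half the dimension on which the symplectic form vanishes. *)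

theory Defs
  imports "HOL-Analysis.Analysis"
begin

definition symplectic_form :: "('v::euclidean_space \<Rightarrow> 'v \<Rightarrow> real) \<Rightarrow> bool" where
  "symplectic_form \<omega> \<longleftrightarrow> bilinear \<omega> \<and> (\<forall>x y. \<omega> x y = - \<omega> y x)
     \<and> (\<forall>x. (\<forall>y. \<omega> x y = 0) \<longrightarrow> x = 0)"

definition quadratic_form :: "('v::euclidean_space \<Rightarrow> real) \<Rightarrow> bool" where
  "quadratic_form H \<longleftrightarrow> (\<exists>B. bilinear B \<and> (\<forall>x y. B x y = B y x) \<and> (\<forall>v. H v = B v v))"

definition ham_field :: "('v::euclidean_space \<Rightarrow> 'v \<Rightarrow> real) \<Rightarrow> ('v \<Rightarrow> real) \<Rightarrow> ('v \<Rightarrow> 'v) \<Rightarrow> bool" where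
  "ham_field \<omega> H X \<longleftrightarrow> linear X \<and> (\<forall>v. (H has_derivative (\<lambda>w. \<omega> (X v) w)) (at v))"

text \<open>Complex eigenvalue of a real linear map on real^'n, i.e. eigenvalue of its
  complexification (the complex matrix with the same real entries).\<close>
definition cx_eigenvalue :: "(real^'n \<Rightarrow> real^'n) \<Rightarrow> complex \<Rightarrow> bool" where
  "cx_eigenvalue X \<mu> \<longleftrightarrow> (\<exists>z :: complex^'n. z \<noteq> 0 \<and>
     (\<chi> i. \<Sum>j\<in>UNIV. complex_of_real (matrix X $ i $ j) * z $ j) = \<mu> *s z)"

definition lagrangian :: "('v::euclidean_space \<Rightarrow> 'v \<Rightarrow> real) \<Rightarrow> 'v set \<Rightarrow> bool" where
  "lagrangian \<omega> L \<longleftrightarrow> subspace L \<and> 2 * dim L = DIM('v) \<and> (\<forall>x\<in>L. \<forall>y\<in>L. \<omega> x y = 0)"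

definition sum_form :: "('a \<Rightarrow> 'a \<Rightarrow> real) \<Rightarrow> ('b \<Rightarrow> 'b \<Rightarrow> real) \<Rightarrow> ('a \<times> 'b) \<Rightarrow> ('a \<times> 'b) \<Rightarrow> real" where
  "sum_form \<omega>1 \<omega>2 v w = \<omega>1 (fst v) (fst w) + \<omega>2 (snd v) (snd w)"

definition sum_ham :: "('a \<Rightarrow> real) \<Rightarrow> ('b \<Rightarrow> real) \<Rightarrow> ('a \<times> 'b) \<Rightarrow> real" where
  "sum_ham H1 H2 v = H1 (fst v) + H2 (snd v)"

end

theory Submission imports Defs "HOL-Computational_Algebra.Polynomial_Factorial" "HOL-Computational_Algebra.Field_as_Ring" "HOL-Computational_Algebra.Fundamental_Theorem_Algebra" begin

definition pev :: "'a::field poly \<Rightarrow> ('a^'k \<Rightarrow> 'a^'k) \<Rightarrow> 'a^'k \<Rightarrow> 'a^'k" where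
  "pev p f z = (\<Sum>i\<le>degree p. coeff p i *s (f^^i) z)"

definition pr :: "real poly \<Rightarrow> ('v::real_vector \<Rightarrow> 'v) \<Rightarrow> 'v \<Rightarrow> 'v" where
  "pr p f z = (\<Sum>i\<le>degree p. coeff p i *\<^sub>R (f^^i) z)"

lemma pev_bound: "degree p \<le> N \<Longrightarrow> pev p f z = (\<Sum>i\<le>N. coeff p i *s (f^^i) z)"
  unfolding pev_def
  by (rule sum.mono_neutral_left) (auto simp: coeff_eq_0)

lemma pr_bound: "degree p \<le> N \<Longrightarrow> pr p f z = (\<Sum>i\<le>N. coeff p i *\<^sub>R (f^^i) z)"
  unfolding pr_def
  by (rule sum.mono_neutral_left) (auto simp: coeff_eq_0)

lemma pev_add: "pev (p + q) f z = pev p f z + pev q f z"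
proof -
  let ?N = "max (degree p) (degree q)"
  have "pev (p+q) f z = (\<Sum>i\<le>?N. coeff (p+q) i *s (f^^i) z)"
    by (rule pev_bound) (simp add: degree_add_le)
  also have "\<dots> = (\<Sum>i\<le>?N. coeff p i *s (f^^i) z) + (\<Sum>i\<le>?N. coeff q i *s (f^^i) z)"
    by (simp add: sum.distrib vector_sadd_rdistrib)
  also have "\<dots> = pev p f z + pev q f z"
    by (simp add: pev_bound[of p "?N"] pev_bound[of q "?N"])
  finally show ?thesis .
qed

lemma pev_smult: "pev (smult c p) f z = c *s pev p f z"
proof -
  have "pev (smult c p) f z = (\<Sum>i\<le>degree p. coeff (smult c p) i *s (f^^i) z)"
    by (rule pev_bound) (simp add: degree_smult_le)
  also have "\<dots> = c *s pev p f z"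
    by (simp add: pev_def vec.scale_sum_right)
  finally show ?thesis .
qed

lemma pev_0[simp]: "pev 0 f z = 0"
  by (simp add: pev_def)

lemma pev_pCons:
  assumes lf: "Vector_Spaces.linear (*s) (*s) f"
  shows "pev (pCons a p) f z = a *s z + f (pev p f z)"
proof -
  have "pev (pCons a p) f z = (\<Sum>i\<le>Suc (degree p). coeff (pCons a p) i *s (f^^i) z)"
    by (rule pev_bound) (simp add: degree_pCons_le)
  also have "\<dots> = a *s z + (\<Sum>i\<le>degree p. coeff p i *s f ((f^^i) z))"
    by (simp add: sum.atMost_Suc_shift del: sum.atMost_Suc)
  also have "(\<Sum>i\<le>degree p. coeff p i *s f ((f^^i) z)) = f (pev p f z)"
    by (simp add: pev_def vec.linear_sum[OF lf] vec.linear_scale[OF lf])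
  finally show ?thesis .
qed

lemma pev_mult:
  assumes lf: "Vector_Spaces.linear (*s) (*s) f"
  shows "pev (p * q) f z = pev p f (pev q f z)"
proof (induction p)
  case 0
  then show ?case by simp
next
  case (pCons a p)
  have "pev (pCons a p * q) f z = pev (smult a q + pCons 0 (p * q)) f z" by simp
  also have "\<dots> = a *s pev q f z + f (pev (p*q) f z)"
    by (simp add: pev_add pev_smult pev_pCons[OF lf])
  also have "\<dots> = pev (pCons a p) f (pev q f z)"
    by (simp add: pev_pCons[OF lf] pCons.IH)
  finally show ?case .
qed

lemma pev_one[simp]: "pev 1 f z = z"
  by (simp add: pev_def)

lemma funpow_lin0:
  fixes f :: "'a::field^'k \<Rightarrow> 'a^'k"
  assumes lf: "Vector_Spaces.linear (*s) (*s) f" shows "(f^^i) 0 = 0"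
proof -
  have f0: "f 0 = 0" by (rule vec.linear_0[OF lf])
  show ?thesis by (induction i) (simp_all add: f0 del: funpow.simps add: funpow_Suc_right)
qed

lemma pev_zero_vec:
  assumes lf: "Vector_Spaces.linear (*s) (*s) f"
  shows "pev p f 0 = 0"
  by (simp add: pev_def funpow_lin0[OF lf])

lemma pev_lin:
  assumes lf: "Vector_Spaces.linear (*s) (*s) f"
  shows "pev [:-\<mu>, 1:] f z = f z - \<mu> *s z"
  by (simp add: pev_pCons[OF lf] pev_def)

lemma remove_roots:
  assumes lf: "Vector_Spaces.linear (*s) (*s) f"
  shows "g \<noteq> 0 \<Longrightarrow> pev g f z = 0 \<Longrightarrow> \<exists>h. h \<noteq> 0 \<and> pev h f z = 0 \<and>
      (\<forall>\<mu>. poly h \<mu> = 0 \<longrightarrow> (\<exists>y. y \<noteq> 0 \<and> f y = \<mu> *s y))"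
proof (induction "degree g" arbitrary: g rule: less_induct)
  case less
  show ?case
  proof (cases "\<forall>\<mu>. poly g \<mu> = 0 \<longrightarrow> (\<exists>y. y \<noteq> 0 \<and> f y = \<mu> *s y)")
    case True
    then show ?thesis using less.prems by blast
  next
    case False
    then obtain \<mu> where r: "poly g \<mu> = 0" and ne: "\<And>y. y \<noteq> 0 \<Longrightarrow> f y \<noteq> \<mu> *s y" by blast
    from r obtain h where g: "g = [:-\<mu>, 1:] * h" by (auto simp: poly_eq_0_iff_dvd elim: dvdE)
    have h0: "h \<noteq> 0" using less.prems g by auto
    have dg: "degree h < degree g" using h0 unfolding g by (subst degree_mult_eq) auto
    from less.prems(2) have "pev ([:-\<mu>, 1:] * h) f z = 0" by (simp only: g)
    then have "pev [:-\<mu>, 1:] f (pev h f z) = 0" by (simp only: pev_mult[OF lf])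
    then have "f (pev h f z) = \<mu> *s pev h f z" by (simp add: pev_lin[OF lf])
    then have "pev h f z = 0" using ne by blast
    then show ?thesis using less.hyps[OF dg h0] by blast
  qed
qed

lemma annihilator:
  fixes f :: "'a::euclidean_space \<Rightarrow> 'a"
  assumes lf: "linear f"
  shows "\<exists>p. p \<noteq> 0 \<and> pr p f u = 0"
proof -
  define D where "D = DIM('a)"
  define v where "v k = (f^^k) u" for k
  show ?thesis
  proof (cases "inj_on v {..D}")
    case False
    then obtain i j where ij: "i \<le> D" "j \<le> D" "i < j" "v i = v j"
      unfolding inj_on_def by (metis atMost_iff linorder_neqE_nat)
    define p :: "real poly" where "p = monom 1 j - monom 1 i"
    have "coeff p j = 1" using ij by (simp add: p_def)
    then have "p \<noteq> 0" by auto
    moreover have "pr p f u = 0"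
    proof -
      have "pr p f u = (\<Sum>k\<le>j. coeff p k *\<^sub>R (f^^k) u)"
        by (rule pr_bound) (unfold p_def, intro degree_diff_le, auto intro: order_trans[OF degree_monom_le] simp: ij less_imp_le)
      also have "\<dots> = (\<Sum>k\<le>j. (if k = j then v k else 0)) - (\<Sum>k\<le>j. (if k = i then v k else 0))"
      proof -
        have "coeff p k *\<^sub>R (f^^k) u = (if k = j then v k else 0) - (if k = i then v k else 0)" for k
          using ij(3) by (auto simp: p_def v_def)
        then show ?thesis by (simp add: sum_subtractf)
      qed
      also have "\<dots> = 0" using ij by simp
      finally show ?thesis .
    qed
    ultimately show ?thesis by blast
  next
    case True
    let ?S = "v ` {..D}"
    have cS: "card ?S = Suc D" using True by (simp add: card_image)
    have "dependent ?S" using cS D_def by (intro dependent_biggerset) auto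
    then obtain c where c: "\<exists>w\<in>?S. c w \<noteq> 0" "(\<Sum>w\<in>?S. c w *\<^sub>R w) = 0"
      using dependent_finite[of ?S] by auto
    from c(1) obtain k0 where k0: "k0 \<le> D" "c (v k0) \<noteq> 0" by auto
    have sum0: "(\<Sum>k\<le>D. c (v k) *\<^sub>R v k) = 0"
      using c(2) by (simp add: sum.reindex[OF True])
    define p :: "real poly" where "p = (\<Sum>k\<le>D. monom (c (v k)) k)"
    have cp: "coeff p k = (if k \<le> D then c (v k) else 0)" for k
      by (simp add: p_def coeff_sum)
    have dp: "degree p \<le> D"
      unfolding p_def by (rule degree_sum_le) (auto intro: order_trans[OF degree_monom_le])
    have "p \<noteq> 0" using k0 cp[of k0] by auto
    moreover have "pr p f u = 0"
      using sum0 by (simp add: pr_bound[OF dp] cp v_def)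
    ultimately show ?thesis by blast
  qed
qed

lemma funpow_prod:
  fixes f :: "'a \<Rightarrow> 'a" and g :: "'b \<Rightarrow> 'b"
  shows "((\<lambda>(a,b). (f a, g b))^^i) (a, b) = ((f^^i) a, (g^^i) b)"
  by (induction i) auto

lemma pr_prod:
  fixes f :: "'a::real_vector \<Rightarrow> 'a" and g :: "'b::real_vector \<Rightarrow> 'b"
  shows "pr p (\<lambda>(a,b). (f a, g b)) (a, b) = (pr p f a, pr p g b)"
  unfolding pr_def funpow_prod
  by (simp add: prod_eq_iff fst_sum snd_sum)

lemma pr_subspace:
  assumes "subspace L" "\<And>x. x \<in> L \<Longrightarrow> T x \<in> L" "z \<in> L"
  shows "pr p T z \<in> L"
proof -
  have "(T^^i) z \<in> L" for i
    by (induction i) (auto simp: assms)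
  then show ?thesis unfolding pr_def
    by (intro subspace_sum subspace_scale assms(1))
qed

definition cx :: "real^'n \<Rightarrow> complex^'n" where "cx v = (\<chi> i. complex_of_real (v $ i))"
definition re :: "complex^'n \<Rightarrow> real^'n" where "re z = (\<chi> i. Re (z $ i))"
definition cmat :: "(real^'n \<Rightarrow> real^'n) \<Rightarrow> complex^'n^'n" where
  "cmat X = (\<chi> i j. complex_of_real (matrix X $ i $ j))"

lemma cmat_cx:
  assumes "linear X"
  shows "cmat X *v cx v = cx (X v)"
proof -
  have "X v = matrix X *v v"
    using matrix_works[of X v] assms linear_matrix_vector_mul_eq by auto
  then show ?thesis
    by (simp add: vec_eq_iff cmat_def cx_def matrix_vector_mult_def)
qed

lemma re_cmat:
  assumes "linear X"
  shows "re (cmat X *v z) = X (re z)"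
proof -
  have "X (re z) = matrix X *v re z"
    using matrix_works[of X "re z"] assms linear_matrix_vector_mul_eq by auto
  then show ?thesis
    by (simp add: vec_eq_iff cmat_def re_def matrix_vector_mult_def Re_sum)
qed

lemma funpow_cx:
  assumes "linear X"
  shows "(((*v) (cmat X))^^i) (cx v) = cx ((X^^i) v)"
  by (induction i) (simp_all add: cmat_cx[OF assms])

lemma pev_of_real:
  assumes "linear X"
  shows "pev (map_poly complex_of_real p) ((*v) (cmat X)) (cx u) = cx (pr p X u)"
proof -
  have d: "degree (map_poly complex_of_real p) = degree p"
    by (rule degree_map_poly) auto
  show ?thesis
    unfolding pev_def pr_def d funpow_cx[OF assms]
    by (simp add: coeff_map_poly vec_eq_iff cx_def)
qed

lemma pev_re:
  assumes "linear X"
  shows "re (pev r ((*v) (cmat X)) (cx u)) = pr (map_poly Re r) X u"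
proof -
  have d: "degree (map_poly Re r) \<le> degree r"
    by (rule map_poly_degree_leq)
  show ?thesis
    unfolding pev_def pr_bound[OF d] funpow_cx[OF assms]
    by (simp add: coeff_map_poly vec_eq_iff cx_def re_def Re_sum)
qed

lemma eig_link:
  assumes "y \<noteq> 0" "cmat X *v y = \<mu> *s y"
  shows "cx_eigenvalue X \<mu>"
  using assms unfolding cx_eigenvalue_def cmat_def matrix_vector_mult_def by auto

lemma complex_part:
  fixes X :: "real^'n \<Rightarrow> real^'n"
  assumes lX: "linear X"
  shows "\<exists>g. g \<noteq> 0 \<and> pev g ((*v) (cmat X)) (cx u) = 0 \<and> (\<forall>\<mu>. poly g \<mu> = 0 \<longrightarrow> cx_eigenvalue X \<mu>)"
proof -
  obtain p where p: "p \<noteq> 0" "pr p X u = 0" using annihilator[OF lX] by blast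
  have "cx (0::real^'n) = 0" by (simp add: cx_def vec_eq_iff)
  then have "pev (map_poly complex_of_real p) ((*v) (cmat X)) (cx u) = 0"
    using p(2) pev_of_real[OF lX] by simp
  moreover have "map_poly complex_of_real p \<noteq> 0" using p(1)
    by (metis degree_0 degree_map_poly leading_coeff_0_iff of_real_eq_0_iff coeff_map_poly of_real_0)
  ultimately obtain h where "h \<noteq> 0" "pev h ((*v) (cmat X)) (cx u) = 0"
      "\<forall>\<mu>. poly h \<mu> = 0 \<longrightarrow> (\<exists>y. y \<noteq> 0 \<and> cmat X *v y = \<mu> *s y)"
    using remove_roots[OF matrix_vector_mul_linear_gen] by blast
  then show ?thesis using eig_link by blast
qed

lemma split_vec:
  fixes X1 :: "real^'n \<Rightarrow> real^'n" and X2 :: "real^'m \<Rightarrow> real^'m"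
  assumes l1: "linear X1" and l2: "linear X2"
    and dis: "\<forall>\<mu>. \<not> (cx_eigenvalue X1 \<mu> \<and> cx_eigenvalue X2 \<mu>)"
  shows "\<exists>q. pr q X1 u = u \<and> pr q X2 w = 0"
proof -
  obtain g1 where g1: "g1 \<noteq> 0" "pev g1 ((*v) (cmat X1)) (cx u) = 0"
     "\<forall>\<mu>. poly g1 \<mu> = 0 \<longrightarrow> cx_eigenvalue X1 \<mu>"
    using complex_part[OF l1] by blast
  obtain g2 where g2: "g2 \<noteq> 0" "pev g2 ((*v) (cmat X2)) (cx w) = 0"
     "\<forall>\<mu>. poly g2 \<mu> = 0 \<longrightarrow> cx_eigenvalue X2 \<mu>"
    using complex_part[OF l2] by blast
  define d where "d = gcd g1 g2"
  have d0: "d \<noteq> 0" using g1(1) by (simp add: d_def)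
  have "degree d = 0"
  proof (rule ccontr)
    assume "degree d \<noteq> 0"
    then have "\<not> constant (poly d)" by (simp add: constant_degree)
    then obtain \<mu> where "poly d \<mu> = 0" using fundamental_theorem_of_algebra by blast
    moreover have "d dvd g1" "d dvd g2" by (simp_all add: d_def)
    ultimately have "poly g1 \<mu> = 0" "poly g2 \<mu> = 0"
      by (metis dvdE mult_eq_0_iff poly_mult)+
    then show False using g1(3) g2(3) dis by blast
  qed
  then have "is_unit d" using d0 by (simp add: is_unit_iff_degree)
  then have "d = 1" unfolding d_def by (simp add: coprime_imp_gcd_eq_1 is_unit_gcd)
  then obtain a b where ab: "a * g1 + b * g2 = 1"
    using bezout_coefficients_fst_snd[of g1 g2] d_def by metis
  define r where "r = b * g2"
  have lin1: "Vector_Spaces.linear (*s) (*s) ((*v) (cmat X1))" by simp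
  have lin2: "Vector_Spaces.linear (*s) (*s) ((*v) (cmat X2))" by simp
  have "pev (a * g1 + b * g2) ((*v) (cmat X1)) (cx u) = cx u" by (simp add: ab)
  then have r1: "pev r ((*v) (cmat X1)) (cx u) = cx u"
    by (simp add: pev_add pev_mult[OF lin1] g1(2) pev_zero_vec[OF lin1] r_def)
  have r2: "pev r ((*v) (cmat X2)) (cx w) = 0"
    by (simp add: pev_mult[OF lin2] g2(2) pev_zero_vec[OF lin2] r_def)
  have "pr (map_poly Re r) X1 u = u"
    using pev_re[OF l1, of r u] r1 by (simp add: re_def cx_def vec_eq_iff)
  moreover have "pr (map_poly Re r) X2 w = 0"
    using pev_re[OF l2, of r w] r2 by (simp add: re_def vec_eq_iff)
  ultimately show ?thesis by blast
qed



lemma bil_lin2: "bilinear \<omega> \<Longrightarrow> linear (\<omega> y)" by (simp add: bilinear_def)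
lemma bil_lin1: "bilinear \<omega> \<Longrightarrow> linear (\<lambda>x. \<omega> x b)" by (simp add: bilinear_def)

lemma ortho_dim:
  fixes \<omega> :: "'v::euclidean_space \<Rightarrow> 'v \<Rightarrow> real"
  assumes bl: "bilinear \<omega>" and nd: "\<forall>x. (\<forall>y. \<omega> x y = 0) \<longrightarrow> x = 0" and W: "subspace W"
  shows "dim {y. \<forall>w\<in>W. \<omega> y w = 0} + dim W = DIM('v)"
proof -
  define \<Phi> where "\<Phi> y = (\<Sum>b\<in>Basis. \<omega> y b *\<^sub>R b)" for y
  have inner: "\<Phi> y \<bullet> x = \<omega> y x" for y x
  proof -
    have "\<omega> y x = \<omega> y (\<Sum>b\<in>Basis. (x \<bullet> b) *\<^sub>R b)" by (simp add: euclidean_representation)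
    also have "\<dots> = (\<Sum>b\<in>Basis. (x \<bullet> b) * \<omega> y b)"
      by (simp add: linear_sum[OF bil_lin2[OF bl]] linear_scale[OF bil_lin2[OF bl]])
    moreover have "\<Phi> y \<bullet> x = (\<Sum>b\<in>Basis. (x \<bullet> b) * \<omega> y b)"
      unfolding \<Phi>_def inner_sum_left by (simp add: inner_commute mult.commute)
    ultimately show ?thesis by simp
  qed
  have linP: "linear \<Phi>"
  proof (rule linearI)
    fix y z show "\<Phi> (y + z) = \<Phi> y + \<Phi> z"
      by (simp add: \<Phi>_def linear_add[OF bil_lin1[OF bl]] scaleR_add_left sum.distrib)
  next
    fix c y show "\<Phi> (c *\<^sub>R y) = c *\<^sub>R \<Phi> y"
      by (simp add: \<Phi>_def linear_scale[OF bil_lin1[OF bl]] scaleR_sum_right)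
  qed
  have injP: "inj \<Phi>"
  proof (rule injI)
    fix y z assume "\<Phi> y = \<Phi> z"
    then have "\<Phi> (y - z) = 0" by (simp add: linear_diff[OF linP])
    then have "\<forall>x. \<omega> (y - z) x = 0" using inner by (metis inner_zero_left)
    then show "y = z" using nd by auto
  qed
  have surjP: "surj \<Phi>" using linear_injective_imp_surjective[OF linP injP] by simp
  define Oc where "Oc = {z. \<forall>w\<in>W. orthogonal w z}"
  have dO: "dim Oc + dim W = DIM('v)"
    using dim_subspace_orthogonal_to_vectors[OF W subspace_UNIV] by (simp add: Oc_def)
  have img: "\<Phi> ` {y. \<forall>w\<in>W. \<omega> y w = 0} = Oc"
  proof
    show "\<Phi> ` {y. \<forall>w\<in>W. \<omega> y w = 0} \<subseteq> Oc"
    proof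
      fix z assume "z \<in> \<Phi> ` {y. \<forall>w\<in>W. \<omega> y w = 0}"
      then obtain y where "z = \<Phi> y" "\<forall>w\<in>W. \<omega> y w = 0" by blast
      then have "\<forall>w\<in>W. w \<bullet> z = 0" using inner[of y] by (simp add: inner_commute[of _ "\<Phi> y"])
      then show "z \<in> Oc" unfolding Oc_def orthogonal_def by blast
    qed
  next
    show "Oc \<subseteq> \<Phi> ` {y. \<forall>w\<in>W. \<omega> y w = 0}"
    proof
      fix z assume z: "z \<in> Oc"
      obtain y where y: "z = \<Phi> y" using surjP by (metis surjD)
      have "\<forall>w\<in>W. w \<bullet> \<Phi> y = 0" using z y unfolding Oc_def orthogonal_def by blast
      then have "\<forall>w\<in>W. \<omega> y w = 0" using inner[of y] by (simp add: inner_commute[of _ "\<Phi> y"])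
      then show "z \<in> \<Phi> ` {y. \<forall>w\<in>W. \<omega> y w = 0}" using y by blast
    qed
  qed
  have "dim (\<Phi> ` {y. \<forall>w\<in>W. \<omega> y w = 0}) = dim {y. \<forall>w\<in>W. \<omega> y w = 0}"
    by (rule dim_image_eq[OF linP]) (meson injP inj_on_subset subset_UNIV)
  then show ?thesis using dO img by simp
qed

lemma orth_subspace:
  fixes \<omega> :: "'v::euclidean_space \<Rightarrow> 'v \<Rightarrow> real"
  assumes bl: "bilinear \<omega>"
  shows "subspace {y. \<forall>w\<in>W. \<omega> y w = 0}"
  unfolding subspace_def
  by (simp add: bilinear_lzero[OF bl] bilinear_ladd[OF bl] bilinear_lmul[OF bl])

lemma isotropic_dim:
  fixes \<omega> :: "'v::euclidean_space \<Rightarrow> 'v \<Rightarrow> real"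
  assumes bl: "bilinear \<omega>" and nd: "\<forall>x. (\<forall>y. \<omega> x y = 0) \<longrightarrow> x = 0" and W: "subspace W"
    and iso: "\<forall>x\<in>W. \<forall>y\<in>W. \<omega> x y = 0"
  shows "2 * dim W \<le> DIM('v)"
proof -
  have "W \<subseteq> {y. \<forall>w\<in>W. \<omega> y w = 0}" using iso by auto
  then have "dim W \<le> dim {y. \<forall>w\<in>W. \<omega> y w = 0}" by (rule dim_subset)
  then show ?thesis using ortho_dim[OF bl nd W] by simp
qed

lemma lagr_orth:
  fixes \<omega> :: "'v::euclidean_space \<Rightarrow> 'v \<Rightarrow> real"
  assumes bl: "bilinear \<omega>" and nd: "\<forall>x. (\<forall>y. \<omega> x y = 0) \<longrightarrow> x = 0"
    and L: "lagrangian \<omega> L"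
  shows "{y. \<forall>w\<in>L. \<omega> y w = 0} = L"
proof -
  have sL: "subspace L" and dL: "2 * dim L = DIM('v)" and iso: "\<forall>x\<in>L. \<forall>y\<in>L. \<omega> x y = 0"
    using L by (auto simp: lagrangian_def)
  have "L \<subseteq> {y. \<forall>w\<in>L. \<omega> y w = 0}" using iso by auto
  moreover have "dim {y. \<forall>w\<in>L. \<omega> y w = 0} \<le> dim L" using ortho_dim[OF bl nd sL] dL by simp
  ultimately show ?thesis
    using subspace_dim_equal[OF sL orth_subspace[OF bl]] by blast
qed



lemma ham_deriv:
  fixes \<omega> :: "'v::euclidean_space \<Rightarrow> 'v \<Rightarrow> real"
  assumes "quadratic_form H" "ham_field \<omega> H X"
  shows "\<exists>B. bilinear B \<and> (\<forall>x y. B x y = B y x) \<and> (\<forall>v. H v = B v v) \<and> linear X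
     \<and> (\<forall>v w. \<omega> (X v) w = 2 * B v w)"
proof -
  obtain B where B: "bilinear B" "\<forall>x y. B x y = B y x" "\<forall>v. H v = B v v"
    using assms(1) unfolding quadratic_form_def by blast
  have lX: "linear X" and d: "\<And>v. (H has_derivative (\<lambda>w. \<omega> (X v) w)) (at v)"
    using assms(2) unfolding ham_field_def by auto
  have bb: "bounded_bilinear B" using bilinear_conv_bounded_bilinear B(1) by blast
  have HB: "H = (\<lambda>x. B x x)" using B(3) by auto
  have "\<omega> (X v) w = 2 * B v w" for v w
  proof -
    have "((\<lambda>x. B x x) has_derivative (\<lambda>h. B v h + B h v)) (at v)"
      using bounded_bilinear.FDERIV[OF bb has_derivative_ident has_derivative_ident] by simp
    then have "(\<lambda>w. \<omega> (X v) w) = (\<lambda>h. B v h + B h v)"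
      using d[of v] HB has_derivative_unique by metis
    then have "\<omega> (X v) w = B v w + B w v" by metis
    then show ?thesis using B(2) by simp
  qed
  then show ?thesis using B lX by blast
qed

theorem lemma2:
  fixes \<omega>1 :: "real^'n \<Rightarrow> real^'n \<Rightarrow> real" and H1 :: "real^'n \<Rightarrow> real"
    and X1 :: "real^'n \<Rightarrow> real^'n"
    and \<omega>2 :: "real^'m \<Rightarrow> real^'m \<Rightarrow> real" and H2 :: "real^'m \<Rightarrow> real"
    and X2 :: "real^'m \<Rightarrow> real^'m"
    and L :: "((real^'n) \<times> (real^'m)) set"
  assumes "symplectic_form \<omega>1" and "symplectic_form \<omega>2"
    and "quadratic_form H1" and "quadratic_form H2"
    and "ham_field \<omega>1 H1 X1" and "ham_field \<omega>2 H2 X2"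
    and "\<forall>\<mu>. \<not> (cx_eigenvalue X1 \<mu> \<and> cx_eigenvalue X2 \<mu>)"
    and "lagrangian (sum_form \<omega>1 \<omega>2) L"
    and "L \<subseteq> {v. sum_ham H1 H2 v = 0}"
  shows "\<exists>L1 L2. lagrangian \<omega>1 L1 \<and> lagrangian \<omega>2 L2
           \<and> L1 \<subseteq> {v. H1 v = 0} \<and> L2 \<subseteq> {v. H2 v = 0}
           \<and> L = L1 \<times> L2"
proof -
  obtain B1 where B1: "bilinear B1" "\<forall>x y. B1 x y = B1 y x" "\<forall>v. H1 v = B1 v v" "linear X1"
     "\<forall>v w. \<omega>1 (X1 v) w = 2 * B1 v w"
    using ham_deriv[OF assms(3,5)] by blast
  obtain B2 where B2: "bilinear B2" "\<forall>x y. B2 x y = B2 y x" "\<forall>v. H2 v = B2 v v" "linear X2"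
     "\<forall>v w. \<omega>2 (X2 v) w = 2 * B2 v w"
    using ham_deriv[OF assms(4,6)] by blast
  have bl1: "bilinear \<omega>1" using assms(1) unfolding symplectic_form_def by (rule conjunct1)
  have nd1: "\<forall>x. (\<forall>y. \<omega>1 x y = 0) \<longrightarrow> x = 0"
    using assms(1) unfolding symplectic_form_def by (rule conjunct2[OF conjunct2])
  have bl2: "bilinear \<omega>2" using assms(2) unfolding symplectic_form_def by (rule conjunct1)
  have nd2: "\<forall>x. (\<forall>y. \<omega>2 x y = 0) \<longrightarrow> x = 0"
    using assms(2) unfolding symplectic_form_def by (rule conjunct2[OF conjunct2])
  define \<sigma> where "\<sigma> = sum_form \<omega>1 \<omega>2"
  have bls: "bilinear \<sigma>"
    unfolding bilinear_def
  proof safe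
    fix x show "linear (\<sigma> x)"
      by (rule linearI) (simp_all add: \<sigma>_def sum_form_def bilinear_radd[OF bl1] bilinear_radd[OF bl2]
          bilinear_rmul[OF bl1] bilinear_rmul[OF bl2] algebra_simps)
  next
    fix y show "linear (\<lambda>x. \<sigma> x y)"
      by (rule linearI) (simp_all add: \<sigma>_def sum_form_def bilinear_ladd[OF bl1] bilinear_ladd[OF bl2]
          bilinear_lmul[OF bl1] bilinear_lmul[OF bl2] algebra_simps)
  qed
  have nds: "\<forall>x. (\<forall>y. \<sigma> x y = 0) \<longrightarrow> x = 0"
  proof (intro allI impI)
    fix x :: "(real^'n) \<times> (real^'m)" assume h: "\<forall>y. \<sigma> x y = 0"
    have "\<forall>c. \<omega>1 (fst x) c = 0"
    proof
      fix c show "\<omega>1 (fst x) c = 0" using h[rule_format, of "(c, 0)"]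
        by (simp add: \<sigma>_def sum_form_def bilinear_rzero[OF bl2])
    qed
    moreover have "\<forall>d. \<omega>2 (snd x) d = 0"
    proof
      fix d show "\<omega>2 (snd x) d = 0" using h[rule_format, of "(0, d)"]
        by (simp add: \<sigma>_def sum_form_def bilinear_rzero[OF bl1])
    qed
    ultimately show "x = 0" using nd1 nd2 by (simp add: prod_eq_iff)
  qed
  have lagL: "lagrangian \<sigma> L" using assms(8) by (simp add: \<sigma>_def)
  then have sL: "subspace L" and dL: "2 * dim L = DIM((real^'n) \<times> (real^'m))"
    by (auto simp: lagrangian_def)
  have HL: "B1 a a + B2 b b = 0" if "(a, b) \<in> L" for a b
    using assms(9) that B1(3) B2(3) by (auto simp: sum_ham_def)
  have polar: "B1 a c + B2 b d = 0" if "(a, b) \<in> L" "(c, d) \<in> L" for a b c d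
  proof -
    have "(a + c, b + d) \<in> L" using subspace_add[OF sL that] by simp
    then have "B1 (a + c) (a + c) + B2 (b + d) (b + d) = 0" by (rule HL)
    then have "B1 a a + B1 a c + B1 c a + B1 c c + (B2 b b + B2 b d + B2 d b + B2 d d) = 0"
      by (simp add: bilinear_ladd[OF B1(1)] bilinear_radd[OF B1(1)]
          bilinear_ladd[OF B2(1)] bilinear_radd[OF B2(1)] algebra_simps)
    moreover have "B1 c a = B1 a c" "B2 d b = B2 b d" using B1(2) B2(2) by auto
    ultimately show ?thesis using HL[OF that(1)] HL[OF that(2)] by linarith
  qed
  define T where "T = (\<lambda>(a, b). (X1 a, X2 b))"
  have inv: "T x \<in> L" if "x \<in> L" for x
  proof -
    have "T x \<in> {y. \<forall>w\<in>L. \<sigma> y w = 0}"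
    proof (clarify)
      fix c d assume "(c, d) \<in> L"
      then have "B1 (fst x) c + B2 (snd x) d = 0" using polar[of "fst x" "snd x" c d] that by simp
      then show "\<sigma> (T x) (c, d) = 0"
        using B1(5) B2(5) by (simp add: T_def \<sigma>_def sum_form_def case_prod_beta)
    qed
    then show ?thesis using lagr_orth[OF bls nds lagL] by simp
  qed
  have split: "(a, 0) \<in> L \<and> (0, b) \<in> L" if "(a, b) \<in> L" for a b
  proof -
    obtain q where q: "pr q X1 a = a" "pr q X2 b = 0"
      using split_vec[OF B1(4) B2(4) assms(7)] by blast
    have "pr q T (a, b) \<in> L" by (rule pr_subspace[OF sL inv that])
    then have a0: "(a, 0) \<in> L" by (simp add: T_def pr_prod q)
    have "(a, b) - (a, 0) \<in> L" by (rule subspace_diff[OF sL that a0])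
    then show ?thesis using a0 by simp
  qed
  define L1 where "L1 = {a. (a, 0) \<in> L}"
  define L2 where "L2 = {b. (0, b) \<in> L}"
  have LL: "L = L1 \<times> L2"
  proof
    show "L \<subseteq> L1 \<times> L2" using split by (auto simp: L1_def L2_def)
  next
    show "L1 \<times> L2 \<subseteq> L"
    proof clarify
      fix a b assume "a \<in> L1" "b \<in> L2"
      then have "(a, 0) \<in> L" "(0, b) \<in> L" by (simp_all add: L1_def L2_def)
      then have "(a, 0) + (0, b) \<in> L" by (rule subspace_add[OF sL])
      then show "(a, b) \<in> L" by simp
    qed
  qed
  have s1: "subspace L1" unfolding subspace_def L1_def
  proof (intro conjI allI ballI impI)
    show "0 \<in> {a. (a, 0) \<in> L}" using subspace_0[OF sL] by (simp add: zero_prod_def)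
  next
    fix x y assume "x \<in> {a. (a, 0) \<in> L}" "y \<in> {a. (a, 0) \<in> L}"
    then show "x + y \<in> {a. (a, 0) \<in> L}" using subspace_add[OF sL, of "(x,0)" "(y,0)"] by simp
  next
    fix c x assume "x \<in> {a. (a, 0) \<in> L}"
    then show "c *\<^sub>R x \<in> {a. (a, 0) \<in> L}" using subspace_scale[OF sL, of "(x,0)" c] by simp
  qed
  have s2: "subspace L2" unfolding subspace_def L2_def
  proof (intro conjI allI ballI impI)
    show "0 \<in> {a. (0, a) \<in> L}" using subspace_0[OF sL] by (simp add: zero_prod_def)
  next
    fix x y assume "x \<in> {a. (0, a) \<in> L}" "y \<in> {a. (0, a) \<in> L}"
    then show "x + y \<in> {a. (0, a) \<in> L}" using subspace_add[OF sL, of "(0,x)" "(0,y)"] by simp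
  next
    fix c x assume "x \<in> {a. (0, a) \<in> L}"
    then show "c *\<^sub>R x \<in> {a. (0, a) \<in> L}" using subspace_scale[OF sL, of "(0,x)" c] by simp
  qed
  have isoL: "\<forall>x\<in>L. \<forall>y\<in>L. \<sigma> x y = 0" using lagL by (simp add: lagrangian_def)
  have iso1: "\<forall>x\<in>L1. \<forall>y\<in>L1. \<omega>1 x y = 0"
  proof (intro ballI)
    fix x y assume "x \<in> L1" "y \<in> L1"
    then have "\<sigma> (x, 0) (y, 0) = 0" using isoL by (simp add: L1_def)
    then show "\<omega>1 x y = 0" by (simp add: \<sigma>_def sum_form_def bilinear_lzero[OF bl2])
  qed
  have iso2: "\<forall>x\<in>L2. \<forall>y\<in>L2. \<omega>2 x y = 0"
  proof (intro ballI)
    fix x y assume "x \<in> L2" "y \<in> L2"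
    then have "\<sigma> (0, x) (0, y) = 0" using isoL by (simp add: L2_def)
    then show "\<omega>2 x y = 0" by (simp add: \<sigma>_def sum_form_def bilinear_lzero[OF bl1])
  qed
  have i1: "2 * dim L1 \<le> DIM(real^'n)" by (rule isotropic_dim[OF bl1 nd1 s1 iso1])
  have i2: "2 * dim L2 \<le> DIM(real^'m)" by (rule isotropic_dim[OF bl2 nd2 s2 iso2])
  have "dim L = dim L1 + dim L2" using LL dim_Times[OF s1 s2] by simp
  then have "2 * dim L1 + 2 * dim L2 = DIM(real^'n) + DIM(real^'m)" using dL by simp
  then have e1: "2 * dim L1 = DIM(real^'n)" and e2: "2 * dim L2 = DIM(real^'m)" using i1 i2 by linarith+
  have lag1: "lagrangian \<omega>1 L1" using s1 e1 iso1 by (simp add: lagrangian_def)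
  have lag2: "lagrangian \<omega>2 L2" using s2 e2 iso2 by (simp add: lagrangian_def)
  have H20: "H2 0 = 0" using B2(3) bilinear_lzero[OF B2(1)] by simp
  have H10: "H1 0 = 0" using B1(3) bilinear_lzero[OF B1(1)] by simp
  have N1: "L1 \<subseteq> {v. H1 v = 0}" using assms(9) H20 by (auto simp: L1_def sum_ham_def)
  have N2: "L2 \<subseteq> {v. H2 v = 0}" using assms(9) H10 by (auto simp: L2_def sum_ham_def)
  show ?thesis using lag1 lag2 N1 N2 LL by blast
qed

end
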